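(* Fix a sequence of matchings $\mathcal{M}=\langle \mathbf{M}^{(1)}, \mathbf{M}^{(2)}, \ldots \rangle$ of a graph $G$ with $n$ nodes and consider the discrete protocol with these matchings. For any non-negative integers $K,\alpha,t$ with $1 \leq \alpha \leq K$, \[ \max_{ y \in \mathbb{Z}^n ,\ \operatorname{disc}(y) \leq K} \Pr\left[ x_{\max}^{(t)} \geq \lfloor \overline{x} \rfloor + \alpha \,\Big|\, x^{(0)} = y \right] \leq \max_{ y \in \mathbb{Z}^n,\ \operatorname{disc}(y) \leq K} \Pr\left[x_{\min}^{(t)} \leq \lfloor \overline{x} \rfloor - \alpha + 3 \,\Big|\, x^{(0)} = y \right], \] and similarly \[ \max_{ y \in \mathbb{Z}^n,\ \operatorname{disc}(y) \leq K} \Pr\left[ x_{\min}^{(t)} \leq \lfloor \overline{x} \rfloor - \alpha \,\Big|\, x^{(0)} = y \right] \leq \max_{ y \in \mathbb{Z}^n,\ \operatorname{disc}(y) \leq K} \Pr\left[x_{\max}^{(t)} \geq \lfloor \overline{x} \rfloor + \alpha - 3 \,\Big|\, x^{(0)} = y \right]. \]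
   Context: Discrete protocol with random orientation: $x^{(t)}\in\mathbb{Z}^n$ is the load vector at the end of round $t$; in round $t$, for each $\{u,v\}\in\mathbf{M}^{(t)}$ both $u,v$ get $\lfloor (x^{(t-1)}_u+x^{(t-1)}_v)/2\rfloor$ tokens and the excess token (if the sum is odd) goes to $u$ or $v$ with probability $1/2$ each, independently over edges and rounds; unmatched nodes keep their load. $\overline{x}=\frac1n\sum_w x^{(0)}_w$ is the average load (of the initial vector $y$), $x^{(t)}_{\max}=\max_u x^{(t)}_u$, $x^{(t)}_{\min}=\min_u x^{(t)}_u$, and $\operatorname{disc}(y)=\max_{u,v}|y_u-y_v|$. The probability is over the random orientations. *)

theory Defs
  imports "HOL-Probability.Probability"
begin

text \<open>Nodes are 0..<n. Loads are functions nat => int (only values at nodes < n matter).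
A matching is a set of edges, each edge being a 2-element set of nodes.\<close>

definition is_graph :: "nat \<Rightarrow> nat set set \<Rightarrow> bool" where
  "is_graph n E \<longleftrightarrow> (\<forall>e\<in>E. card e = 2 \<and> e \<subseteq> {..<n})"

definition is_matching :: "nat set set \<Rightarrow> nat set set \<Rightarrow> bool" where
  "is_matching E M \<longleftrightarrow> M \<subseteq> E \<and> (\<forall>e\<in>M. \<forall>e'\<in>M. e \<noteq> e' \<longrightarrow> e \<inter> e' = {})"

text \<open>One round of the discrete protocol, given the orientation r: for each matched edge e,
r e is the endpoint of e that receives the excess token (if any).\<close>
definition step :: "nat set set \<Rightarrow> (nat \<Rightarrow> int) \<Rightarrow> (nat set \<Rightarrow> nat) \<Rightarrow> (nat \<Rightarrow> int)" where
  "step M x r = (\<lambda>w. if \<exists>e\<in>M. w \<in> e then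
      (let e = (THE e. e \<in> M \<and> w \<in> e); s = (\<Sum>u\<in>e. x u)
       in s div 2 + (if odd s \<and> r e = w then 1 else 0))
    else x w)"

definition orientation :: "nat set set \<Rightarrow> (nat set \<Rightarrow> nat) pmf" where
  "orientation M = Pi_pmf M undefined (\<lambda>e. pmf_of_set e)"

text \<open>Distribution of the load vector x^(t) at the end of round t, given x^(0) = y;
round t uses matching Ms t (t = 1, 2, ...).\<close>
primrec protocol :: "(nat \<Rightarrow> nat set set) \<Rightarrow> (nat \<Rightarrow> int) \<Rightarrow> nat \<Rightarrow> (nat \<Rightarrow> int) pmf" where
  "protocol Ms y 0 = return_pmf y"
| "protocol Ms y (Suc t) =
     bind_pmf (protocol Ms y t) (\<lambda>x. map_pmf (step (Ms (Suc t)) x) (orientation (Ms (Suc t))))"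

definition xmax :: "nat \<Rightarrow> (nat \<Rightarrow> int) \<Rightarrow> int" where
  "xmax n x = Max (x ` {..<n})"

definition xmin :: "nat \<Rightarrow> (nat \<Rightarrow> int) \<Rightarrow> int" where
  "xmin n x = Min (x ` {..<n})"

definition avg :: "nat \<Rightarrow> (nat \<Rightarrow> int) \<Rightarrow> real" where
  "avg n y = (\<Sum>w<n. real_of_int (y w)) / real n"

definition disc :: "nat \<Rightarrow> (nat \<Rightarrow> int) \<Rightarrow> int" where
  "disc n y = Max {\<bar>y u - y v\<bar> | u v. u < n \<and> v < n}"

end

theory Submission
  imports Defs
begin

lemma card2_other:
  fixes e :: "nat set"
  assumes "card e = 2" "v \<in> e"
  shows "\<Sum>e - v \<in> e \<and> \<Sum>e - v \<noteq> v \<and> v \<le> \<Sum>e \<and> \<Sum>e - (\<Sum>e - v) = v"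
proof -
  obtain a b where e: "e = {a,b}" "a \<noteq> b" using assms(1) by (meson card_2_iff)
  have s: "\<Sum>e = a + b" using e by simp
  have "v = a \<or> v = b" using assms(2) e(1) by blast
  then show ?thesis using s e by auto
qed

lemma card2_cases:
  fixes e :: "nat set"
  assumes "card e = 2" "v \<in> e" "w \<in> e"
  shows "w = v \<or> w = \<Sum>e - v"
proof -
  obtain a b where e: "e = {a,b}" "a \<noteq> b" using assms(1) by (meson card_2_iff)
  have s: "\<Sum>e = a + b" using e by simp
  have "v = a \<or> v = b" "w = a \<or> w = b" using assms(2,3) e(1) by blast+
  then show ?thesis using s e by auto
qed

definition flip :: "nat set set \<Rightarrow> (nat set \<Rightarrow> nat) \<Rightarrow> (nat set \<Rightarrow> nat)" where
  "flip M r = (\<lambda>e. if e \<in> M \<and> r e \<in> e then \<Sum>e - r e else r e)"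

lemma flip_mem: "\<forall>e\<in>M. card e = 2 \<Longrightarrow> e \<in> M \<Longrightarrow> (flip M r e \<in> e) = (r e \<in> e)"
proof (cases "r e \<in> e")
  case True
  assume "\<forall>e\<in>M. card e = 2" "e \<in> M"
  then have "\<Sum>e - r e \<in> e" using card2_other[of e "r e"] True by blast
  moreover have "flip M r e = \<Sum>e - r e" using True \<open>e \<in> M\<close> unfolding flip_def by simp
  ultimately show ?thesis using True by simp
next
  case False
  then have "flip M r e = r e" unfolding flip_def by simp
  then show ?thesis by simp
qed

lemma flip_invol: "\<forall>e\<in>M. card e = 2 \<Longrightarrow> flip M (flip M r) = r"
proof
  fix e assume A: "\<forall>e\<in>M. card e = 2"
  show "flip M (flip M r) e = r e"
  proof (cases "e \<in> M \<and> r e \<in> e")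
    case True
    have c: "\<Sum>e - r e \<in> e" "\<Sum>e - (\<Sum>e - r e) = r e" using card2_other[of e "r e"] A True by auto
    have f1: "flip M r e = \<Sum>e - r e" using True unfolding flip_def by simp
    have "flip M (flip M r) e = \<Sum>e - flip M r e" using True f1 c(1) unfolding flip_def[of M "flip M r"] by simp
    then show ?thesis using f1 c(2) by simp
  next
    case False
    then show ?thesis unfolding flip_def by auto
  qed
qed

lemma orient_flip:
  assumes fin: "finite M" and c2: "\<forall>e\<in>M. card e = 2"
  shows "map_pmf (flip M) (orientation M) = orientation M"
proof (rule pmf_eqI)
  fix r
  have inj: "inj (flip M)" by (metis c2 flip_invol injI)
  have "pmf (map_pmf (flip M) (orientation M)) r
      = pmf (map_pmf (flip M) (orientation M)) (flip M (flip M r))"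
    using flip_invol[OF c2] by simp
  also have "\<dots> = pmf (orientation M) (flip M r)" by (rule pmf_map_inj'[OF inj])
  also have "\<dots> = pmf (orientation M) r"
  proof -
    have out: "(\<forall>x. x \<notin> M \<longrightarrow> flip M r x = undefined) = (\<forall>x. x \<notin> M \<longrightarrow> r x = undefined)"
      unfolding flip_def by auto
    have pr: "(\<Prod>x\<in>M. pmf (pmf_of_set x) (flip M r x)) = (\<Prod>x\<in>M. pmf (pmf_of_set x) (r x))"
    proof (intro prod.cong refl)
      fix x assume x: "x \<in> M"
      have "(flip M r x \<in> x) = (r x \<in> x)" by (rule flip_mem[OF c2 x])
      moreover have "x \<noteq> {}" "finite x" using c2 x by (auto intro: card_ge_0_finite)
      ultimately show "pmf (pmf_of_set x) (flip M r x) = pmf (pmf_of_set x) (r x)"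
        by (simp add: indicator_def)
    qed
    show ?thesis unfolding orientation_def pmf_Pi[OF fin] out pr ..
  qed
  finally show "pmf (map_pmf (flip M) (orientation M)) r = pmf (orientation M) r" .
qed

lemma orient_set:
  assumes fin: "finite M" and c2: "\<forall>e\<in>M. card e = 2"
    and r: "r \<in> set_pmf (orientation M)" and e: "e \<in> M"
  shows "r e \<in> e"
proof -
  have ne: "e \<noteq> {}" "finite e" using c2 e by (auto intro: card_ge_0_finite)
  from r have "r \<in> PiE_dflt M undefined (set_pmf \<circ> (\<lambda>e. pmf_of_set e))"
    using set_Pi_pmf_subset'[OF fin, of undefined "\<lambda>e. pmf_of_set e"] unfolding orientation_def by blast
  then have "r e \<in> set_pmf (pmf_of_set e)" using e by (auto simp: PiE_dflt_def)
  then show ?thesis using ne by simp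
qed

lemma step_neg:
  assumes c2: "\<forall>e\<in>M. card e = 2"
    and disj: "\<forall>e\<in>M. \<forall>e'\<in>M. e \<noteq> e' \<longrightarrow> e \<inter> e' = {}"
    and r: "\<forall>e\<in>M. r e \<in> e"
  shows "step M (- x) (flip M r) = - step M x r"
proof
  fix w
  show "step M (- x) (flip M r) w = (- step M x r) w"
  proof (cases "\<exists>e\<in>M. w \<in> e")
    case False
    then show ?thesis unfolding step_def by simp
  next
    case True
    then obtain e where e: "e \<in> M" "w \<in> e" by blast
    have the: "(THE e. e \<in> M \<and> w \<in> e) = e"
      using e disj by (intro the_equality) auto
    define s where "s = (\<Sum>u\<in>e. x u)"
    have s': "(\<Sum>u\<in>e. - x u) = - s" unfolding s_def by (simp add: sum_negf)
    have o: "\<Sum>e - r e \<noteq> r e"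
      using card2_other[of e "r e"] c2 r e by auto
    have fl: "flip M r e = \<Sum>e - r e" unfolding flip_def using e r by auto
    have one: "(if flip M r e = w then 1 else 0) + (if r e = w then 1 else 0) = (1::int)"
    proof -
      have "w = r e \<or> w = \<Sum>e - r e" using card2_cases[of e "r e" w] c2 r e by blast
      then show ?thesis using o fl by auto
    qed
    have lhs: "step M (- x) (flip M r) w = (- s) div 2 + (if odd s \<and> flip M r e = w then 1 else 0)"
      unfolding step_def using True by (simp add: the s' Let_def)
    have rhs: "step M x r w = s div 2 + (if odd s \<and> r e = w then 1 else 0)"
      unfolding step_def using True by (simp add: the s_def Let_def)
    show ?thesis
    proof (cases "odd s")
      case True
      then have "(- s) div 2 = - (s div 2) - 1" by presburger
      then show ?thesis using lhs rhs one True by auto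
    next
      case False
      then have "(- s) div 2 = - (s div 2)" by presburger
      then show ?thesis using lhs rhs False by auto
    qed
  qed
qed

lemma protocol_neg:
  assumes g: "is_graph n E"
    and m: "\<And>s. s \<ge> 1 \<Longrightarrow> is_matching E (Ms s)"
  shows "protocol Ms (- y) t = map_pmf uminus (protocol Ms y t)"
proof (induction t)
  case 0
  then show ?case by simp
next
  case (Suc t)
  define M where "M = Ms (Suc t)"
  have mm: "is_matching E M" using m M_def by simp
  have c2: "\<forall>e\<in>M. card e = 2" using mm g by (auto simp: is_matching_def is_graph_def)
  have disj: "\<forall>e\<in>M. \<forall>e'\<in>M. e \<noteq> e' \<longrightarrow> e \<inter> e' = {}" using mm by (auto simp: is_matching_def)
  have "M \<subseteq> Pow {..<n}" using mm g by (auto simp: is_matching_def is_graph_def)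
  then have fin: "finite M" by (rule finite_subset) simp
  let ?O = "orientation M"
  have "protocol Ms (- y) (Suc t)
      = bind_pmf (map_pmf uminus (protocol Ms y t)) (\<lambda>x. map_pmf (step M x) ?O)"
    by (simp only: protocol.simps M_def Suc.IH)
  also have "\<dots> = bind_pmf (protocol Ms y t) (\<lambda>x. map_pmf (step M (- x)) ?O)"
    by (simp add: bind_map_pmf)
  also have "\<dots> = bind_pmf (protocol Ms y t) (\<lambda>x. map_pmf (step M (- x)) (map_pmf (flip M) ?O))"
    using orient_flip[OF fin c2] by simp
  also have "\<dots> = bind_pmf (protocol Ms y t) (\<lambda>x. map_pmf uminus (map_pmf (step M x) ?O))"
    unfolding pmf.map_comp
    by (intro bind_pmf_cong refl map_pmf_cong)
       (auto simp: step_neg[OF c2 disj] orient_set[OF fin c2])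
  also have "\<dots> = map_pmf uminus (protocol Ms y (Suc t))"
    by (simp add: M_def map_bind_pmf)
  finally show ?case .
qed


lemma xmax_neg: "n \<ge> 1 \<Longrightarrow> xmax n (- x) = - xmin n x"
  and xmin_neg: "n \<ge> 1 \<Longrightarrow> xmin n (- x) = - xmax n x"
proof -
  assume n: "n \<ge> 1"
  have "0 \<in> {..<n}" using n by simp
  then have ne: "x ` {..<n} \<noteq> {}" "finite (x ` {..<n})" by auto
  have A: "(- x) ` {..<n} = uminus ` (x ` {..<n})" by auto
  show "xmax n (- x) = - xmin n x" unfolding xmax_def xmin_def A
  proof (rule Max_eqI)
    show "finite (uminus ` x ` {..<n})" using ne by simp
    show "\<And>y. y \<in> uminus ` x ` {..<n} \<Longrightarrow> y \<le> - Min (x ` {..<n})" using ne by auto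
    show "- Min (x ` {..<n}) \<in> uminus ` x ` {..<n}" using ne Min_in by blast
  qed
  show "xmin n (- x) = - xmax n x" unfolding xmax_def xmin_def A
  proof (rule Min_eqI)
    show "finite (uminus ` x ` {..<n})" using ne by simp
    show "\<And>y. y \<in> uminus ` x ` {..<n} \<Longrightarrow> - Max (x ` {..<n}) \<le> y" using ne by auto
    show "- Max (x ` {..<n}) \<in> uminus ` x ` {..<n}" using ne Max_in by blast
  qed
qed

lemma avg_neg: "avg n (- y) = - avg n y"
  unfolding avg_def by (simp add: sum_negf)

lemma disc_neg: "disc n (- y) = disc n y"
proof -
  have "{\<bar>(- y) u - (- y) v\<bar> | u v. u < n \<and> v < n} = {\<bar>y u - y v\<bar> | u v. u < n \<and> v < n}"
  proof -
    have "\<And>u v. \<bar>(- y) u - (- y) v\<bar> = \<bar>y u - y v\<bar>" by (simp add: abs_minus_commute)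
    then show ?thesis by (simp only:)
  qed
  then show ?thesis unfolding disc_def by (simp only:)
qed

lemma prob_le1: "measure_pmf.prob (protocol Ms y t) A \<le> 1"
  by (rule measure_pmf.prob_le_1)

theorem lemma2p7:
  fixes n :: nat and E :: "nat set set" and Ms :: "nat \<Rightarrow> nat set set"
    and K \<alpha> t :: nat
  assumes "n \<ge> 1"
    and "is_graph n E"
    and "\<And>s. s \<ge> 1 \<Longrightarrow> is_matching E (Ms s)"
    and "1 \<le> \<alpha>" and "\<alpha> \<le> K"
  shows "((SUP y\<in>{y. disc n y \<le> int K}.
            measure_pmf.prob (protocol Ms y t)
              {x. xmax n x \<ge> \<lfloor>avg n y\<rfloor> + int \<alpha>})
       \<le> (SUP y\<in>{y. disc n y \<le> int K}.
            measure_pmf.prob (protocol Ms y t)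
              {x. xmin n x \<le> \<lfloor>avg n y\<rfloor> - int \<alpha> + 3})) \<and>
       ((SUP y\<in>{y. disc n y \<le> int K}.
            measure_pmf.prob (protocol Ms y t)
              {x. xmin n x \<le> \<lfloor>avg n y\<rfloor> - int \<alpha>})
       \<le> (SUP y\<in>{y. disc n y \<le> int K}.
            measure_pmf.prob (protocol Ms y t)
              {x. xmax n x \<ge> \<lfloor>avg n y\<rfloor> + int \<alpha> - 3}))"
proof -
  let ?D = "{y. disc n y \<le> int K}"
  have ne: "?D \<noteq> {}"
  proof -
    have "{\<bar>(\<lambda>_. 0::int) u - (\<lambda>_. 0) v\<bar> | u v. u < n \<and> v < n} = {0}"
      using assms(1) by (auto intro!: exI[of _ 0])
    then have "disc n (\<lambda>_. 0) = 0" unfolding disc_def by simp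
    then show ?thesis by (auto intro!: exI[of _ "\<lambda>_. 0"])
  qed
  have bdd: "\<And>B. bdd_above ((\<lambda>y. measure_pmf.prob (protocol Ms y t) (B y)) ` ?D)"
    by (intro bdd_aboveI[where M=1]) (auto intro: prob_le1)
  have negD: "\<And>y. y \<in> ?D \<Longrightarrow> - y \<in> ?D" by (simp add: disc_neg)
  have PN: "\<And>y. protocol Ms (- y) t = map_pmf uminus (protocol Ms y t)"
    by (rule protocol_neg[OF assms(2,3)])
  have fl: "\<And>a::real. \<lfloor>- a\<rfloor> = - \<lceil>a\<rceil>" by (simp add: floor_minus)
  have cf: "\<And>a::real. \<lceil>a\<rceil> \<le> \<lfloor>a\<rfloor> + 1" using ceiling_diff_floor_le_1 by (metis diff_le_eq add.commute)
  have one: "measure_pmf.prob (protocol Ms y t) {x. xmax n x \<ge> \<lfloor>avg n y\<rfloor> + int \<alpha>}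
     \<le> measure_pmf.prob (protocol Ms (- y) t) {x. xmin n x \<le> \<lfloor>avg n (- y)\<rfloor> - int \<alpha> + 3}" for y
  proof -
    have "measure_pmf.prob (protocol Ms (- y) t) {x. xmin n x \<le> \<lfloor>avg n (- y)\<rfloor> - int \<alpha> + 3}
      = measure_pmf.prob (protocol Ms y t) {x. - xmax n x \<le> - \<lceil>avg n y\<rceil> - int \<alpha> + 3}"
      by (simp add: PN avg_neg fl xmin_neg[OF assms(1)] vimage_def)
    moreover have "measure_pmf.prob (protocol Ms y t) {x. xmax n x \<ge> \<lfloor>avg n y\<rfloor> + int \<alpha>}
      \<le> measure_pmf.prob (protocol Ms y t) {x. - xmax n x \<le> - \<lceil>avg n y\<rceil> - int \<alpha> + 3}"
    proof (rule measure_pmf.finite_measure_mono)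
      show "{x. xmax n x \<ge> \<lfloor>avg n y\<rfloor> + int \<alpha>} \<subseteq> {x. - xmax n x \<le> - \<lceil>avg n y\<rceil> - int \<alpha> + 3}"
      proof
        fix x assume "x \<in> {x. xmax n x \<ge> \<lfloor>avg n y\<rfloor> + int \<alpha>}"
        then have "xmax n x \<ge> \<lfloor>avg n y\<rfloor> + int \<alpha>" by simp
        then show "x \<in> {x. - xmax n x \<le> - \<lceil>avg n y\<rceil> - int \<alpha> + 3}"
          using cf[of "avg n y"] by simp
      qed
    qed simp
    ultimately show ?thesis by simp
  qed
  have two: "measure_pmf.prob (protocol Ms y t) {x. xmin n x \<le> \<lfloor>avg n y\<rfloor> - int \<alpha>}
     \<le> measure_pmf.prob (protocol Ms (- y) t) {x. xmax n x \<ge> \<lfloor>avg n (- y)\<rfloor> + int \<alpha> - 3}" for y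
  proof -
    have "measure_pmf.prob (protocol Ms (- y) t) {x. xmax n x \<ge> \<lfloor>avg n (- y)\<rfloor> + int \<alpha> - 3}
      = measure_pmf.prob (protocol Ms y t) {x. - xmin n x \<ge> - \<lceil>avg n y\<rceil> + int \<alpha> - 3}"
      by (simp add: PN avg_neg fl xmax_neg[OF assms(1)] vimage_def)
    moreover have "measure_pmf.prob (protocol Ms y t) {x. xmin n x \<le> \<lfloor>avg n y\<rfloor> - int \<alpha>}
      \<le> measure_pmf.prob (protocol Ms y t) {x. - xmin n x \<ge> - \<lceil>avg n y\<rceil> + int \<alpha> - 3}"
    proof (rule measure_pmf.finite_measure_mono)
      show "{x. xmin n x \<le> \<lfloor>avg n y\<rfloor> - int \<alpha>} \<subseteq> {x. - xmin n x \<ge> - \<lceil>avg n y\<rceil> + int \<alpha> - 3}"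
      proof
        fix x assume "x \<in> {x. xmin n x \<le> \<lfloor>avg n y\<rfloor> - int \<alpha>}"
        then have "xmin n x \<le> \<lfloor>avg n y\<rfloor> - int \<alpha>" by simp
        moreover have "\<lfloor>avg n y\<rfloor> \<le> \<lceil>avg n y\<rceil>" by (rule floor_le_ceiling)
        ultimately show "x \<in> {x. - xmin n x \<ge> - \<lceil>avg n y\<rceil> + int \<alpha> - 3}"
          unfolding mem_Collect_eq by linarith
      qed
    qed simp
    ultimately show ?thesis by simp
  qed
  show ?thesis
  proof
    show "(SUP y\<in>?D. measure_pmf.prob (protocol Ms y t) {x. xmax n x \<ge> \<lfloor>avg n y\<rfloor> + int \<alpha>})
       \<le> (SUP y\<in>?D. measure_pmf.prob (protocol Ms y t) {x. xmin n x \<le> \<lfloor>avg n y\<rfloor> - int \<alpha> + 3})"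
    proof (rule cSUP_least[OF ne])
      fix y assume y: "y \<in> ?D"
      show "measure_pmf.prob (protocol Ms y t) {x. xmax n x \<ge> \<lfloor>avg n y\<rfloor> + int \<alpha>}
         \<le> (SUP y\<in>?D. measure_pmf.prob (protocol Ms y t) {x. xmin n x \<le> \<lfloor>avg n y\<rfloor> - int \<alpha> + 3})"
        using one[of y] by (rule cSUP_upper2[OF bdd negD[OF y]])
    qed
    show "(SUP y\<in>?D. measure_pmf.prob (protocol Ms y t) {x. xmin n x \<le> \<lfloor>avg n y\<rfloor> - int \<alpha>})
       \<le> (SUP y\<in>?D. measure_pmf.prob (protocol Ms y t) {x. xmax n x \<ge> \<lfloor>avg n y\<rfloor> + int \<alpha> - 3})"
    proof (rule cSUP_least[OF ne])
      fix y assume y: "y \<in> ?D"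
      show "measure_pmf.prob (protocol Ms y t) {x. xmin n x \<le> \<lfloor>avg n y\<rfloor> - int \<alpha>}
         \<le> (SUP y\<in>?D. measure_pmf.prob (protocol Ms y t) {x. xmax n x \<ge> \<lfloor>avg n y\<rfloor> + int \<alpha> - 3})"
        using two[of y] by (rule cSUP_upper2[OF bdd negD[OF y]])
    qed
  qed
qed

end
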